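(* Consider an instance of $k$-robust Steiner forest on an undirected graph $G=(V,E)$ with edge costs $c$, pair set $U\subseteq V\times V$, inflation $\lambda\ge1$ and integer $k\ge1$, a threshold $T\ge0$, and constants $\beta,\gamma$ with $2<\gamma\le\beta/2$. Run the following procedure: start with $S_r=S_f=W=\emptyset$; while there is a pair $(s,t)\in U$ with $d_{G/(S_r\cup S_f)}(s,t)>\beta\frac{T}{k}$, add $(s,t)$ to $S_r$; then, if $d_G(s,w)<\gamma\frac{T}{k}$ for some $w\in W$, add $(s,w)$ to $S_f$ for such a $w$, else add $s$ to $W$; then, if $d_G(t,w')<\gamma\frac Tk$ for some $w'\in W$, add $(t,w')$ to $S_f$ for such a $w'$, else add $t$ to $W$. Let $\Phi_T$ be the union of a Steiner forest connecting all pairs in $S_r$ of cost at most twice the minimum, together with shortest paths in $G$ connecting every pair in $S_f$. Let $\Phi^*$ and $T^*$ denote the first-stage cost and second-stage cost of an optimal solution of the $k$-robust instance. If $T\ge T^*$ then $c(\Phi_T)\le\frac{4\gamma}{\gamma-2}\cdot(\Phi^*+T^* )$.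
   Context: $d_G$ is the shortest-path distance in $G$ under edge costs $c$; for a set of vertex pairs $S$, $G/S$ is the graph obtained by identifying the two vertices of each pair in $S$. $k$-robust Steiner forest: a feasible solution is a first-stage edge set $E_0$ and, for every $D\subseteq U$ with $|D|=k$, an edge set $E_D$ such that $E_0\cup E_D$ connects every pair of $D$; its cost is $c(E_0)+\lambda\max_Dc(E_D)$, with first-stage cost $c(E_0)$ and second-stage cost $\max_Dc(E_D)$. *)

theory Defs
  imports "HOL-Library.Extended_Real"
begin

definition graph :: "'v set \<Rightarrow> 'v set set \<Rightarrow> bool" where
  "graph V E \<longleftrightarrow> finite V \<and> (\<forall>e\<in>E. \<exists>u v. e = {u, v} \<and> u \<in> V \<and> v \<in> V \<and> u \<noteq> v)"

text \<open>Walks in G/S: a step is either an edge of G (paying its cost) or a jump between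
  the two vertices of an identified pair of S (free, since the vertices are merged).\<close>

definition linked :: "('v \<times> 'v) set \<Rightarrow> 'v \<Rightarrow> 'v \<Rightarrow> bool" where
  "linked S a b \<longleftrightarrow> (a, b) \<in> S \<or> (b, a) \<in> S"

definition is_walk :: "'v set set \<Rightarrow> ('v \<times> 'v) set \<Rightarrow> 'v list \<Rightarrow> bool" where
  "is_walk E S xs \<longleftrightarrow> xs \<noteq> [] \<and> (\<forall>(a, b)\<in>set (zip xs (tl xs)). {a, b} \<in> E \<or> linked S a b)"

definition walk_cost :: "('v set \<Rightarrow> real) \<Rightarrow> ('v \<times> 'v) set \<Rightarrow> 'v list \<Rightarrow> real" where
  "walk_cost c S xs = sum_list (map (\<lambda>(a, b). if linked S a b then 0 else c {a, b}) (zip xs (tl xs)))"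

text \<open>Shortest-path distance in G/S (infinite if no walk exists); dist E c {} is d_G.\<close>
definition dist :: "'v set set \<Rightarrow> ('v set \<Rightarrow> real) \<Rightarrow> ('v \<times> 'v) set \<Rightarrow> 'v \<Rightarrow> 'v \<Rightarrow> ereal" where
  "dist E c S s t = (INF xs\<in>{xs. is_walk E S xs \<and> hd xs = s \<and> last xs = t}. ereal (walk_cost c S xs))"

definition path_edges :: "'v list \<Rightarrow> 'v set set" where
  "path_edges xs = set (map (\<lambda>(a, b). {a, b}) (zip xs (tl xs)))"

definition shortest_path :: "'v set set \<Rightarrow> ('v set \<Rightarrow> real) \<Rightarrow> 'v \<Rightarrow> 'v \<Rightarrow> 'v list \<Rightarrow> bool" where
  "shortest_path E c a b xs \<longleftrightarrow> is_walk E {} xs \<and> distinct xs \<and> hd xs = a \<and> last xs = b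
     \<and> ereal (walk_cost c {} xs) = dist E c {} a b"

definition connects :: "'v set set \<Rightarrow> 'v \<Rightarrow> 'v \<Rightarrow> bool" where
  "connects F s t \<longleftrightarrow> (s, t) \<in> {(a, b). {a, b} \<in> F}\<^sup>*"

definition steiner_forest :: "'v set set \<Rightarrow> ('v \<times> 'v) set \<Rightarrow> 'v set set \<Rightarrow> bool" where
  "steiner_forest E P F \<longleftrightarrow> F \<subseteq> E \<and> (\<forall>(s, t)\<in>P. connects F s t)"

definition steiner_opt :: "'v set set \<Rightarrow> ('v set \<Rightarrow> real) \<Rightarrow> ('v \<times> 'v) set \<Rightarrow> real" where
  "steiner_opt E c P = Inf {sum c F | F. steiner_forest E P F}"

definition scenarios :: "('v \<times> 'v) set \<Rightarrow> nat \<Rightarrow> ('v \<times> 'v) set set" where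
  "scenarios U k = {D. D \<subseteq> U \<and> card D = k}"

definition robust_feasible ::
  "'v set set \<Rightarrow> ('v \<times> 'v) set \<Rightarrow> nat \<Rightarrow> 'v set set \<Rightarrow> (('v \<times> 'v) set \<Rightarrow> 'v set set) \<Rightarrow> bool" where
  "robust_feasible E U k E0 ED \<longleftrightarrow> E0 \<subseteq> E \<and>
     (\<forall>D\<in>scenarios U k. ED D \<subseteq> E \<and> (\<forall>(s, t)\<in>D. connects (E0 \<union> ED D) s t))"

definition second_stage ::
  "('v set \<Rightarrow> real) \<Rightarrow> ('v \<times> 'v) set \<Rightarrow> nat \<Rightarrow> (('v \<times> 'v) set \<Rightarrow> 'v set set) \<Rightarrow> real" where
  "second_stage c U k ED = Max ((\<lambda>D. sum c (ED D)) ` scenarios U k)"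

definition robust_cost ::
  "('v set \<Rightarrow> real) \<Rightarrow> ('v \<times> 'v) set \<Rightarrow> nat \<Rightarrow> real \<Rightarrow> 'v set set \<Rightarrow> (('v \<times> 'v) set \<Rightarrow> 'v set set) \<Rightarrow> real" where
  "robust_cost c U k lam E0 ED = sum c E0 + lam * second_stage c U k ED"

definition robust_optimal ::
  "'v set set \<Rightarrow> ('v set \<Rightarrow> real) \<Rightarrow> ('v \<times> 'v) set \<Rightarrow> nat \<Rightarrow> real \<Rightarrow> 'v set set \<Rightarrow> (('v \<times> 'v) set \<Rightarrow> 'v set set) \<Rightarrow> bool" where
  "robust_optimal E c U k lam E0 ED \<longleftrightarrow> robust_feasible E U k E0 ED \<and>
     (\<forall>E0' ED'. robust_feasible E U k E0' ED' \<longrightarrow> robust_cost c U k lam E0 ED \<le> robust_cost c U k lam E0' ED')"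

definition proc_terminal ::
  "'v set set \<Rightarrow> ('v set \<Rightarrow> real) \<Rightarrow> real \<Rightarrow> 'v \<Rightarrow> ('v \<times> 'v) set \<times> 'v set \<Rightarrow> ('v \<times> 'v) set \<times> 'v set \<Rightarrow> bool" where
  "proc_terminal E c r x st st' \<longleftrightarrow>
     (\<exists>w\<in>snd st. dist E c {} x w < ereal r \<and> st' = (insert (x, w) (fst st), snd st))
   \<or> ((\<forall>w\<in>snd st. \<not> dist E c {} x w < ereal r) \<and> st' = (fst st, insert x (snd st)))"

definition violated :: "'v set set \<Rightarrow> ('v set \<Rightarrow> real) \<Rightarrow> real \<Rightarrow> ('v \<times> 'v) set \<Rightarrow> ('v \<times> 'v) set \<Rightarrow> 'v \<Rightarrow> 'v \<Rightarrow> bool" where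
  "violated E c b Sr Sf s t \<longleftrightarrow> dist E c (Sr \<union> Sf) s t > ereal b"

definition proc_step ::
  "'v set set \<Rightarrow> ('v set \<Rightarrow> real) \<Rightarrow> ('v \<times> 'v) set \<Rightarrow> real \<Rightarrow> real \<Rightarrow>
   ('v \<times> 'v) set \<times> ('v \<times> 'v) set \<times> 'v set \<Rightarrow> ('v \<times> 'v) set \<times> ('v \<times> 'v) set \<times> 'v set \<Rightarrow> bool" where
  "proc_step E c U b r st st' \<longleftrightarrow>
     (case st of (Sr, Sf, W) \<Rightarrow> case st' of (Sr', Sf', W') \<Rightarrow>
       (\<exists>(s, t)\<in>U. violated E c b Sr Sf s t \<and> Sr' = insert (s, t) Sr \<and>
          (\<exists>mid. proc_terminal E c r s (Sf, W) mid \<and> proc_terminal E c r t mid (Sf', W'))))"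

definition proc_final ::
  "'v set set \<Rightarrow> ('v set \<Rightarrow> real) \<Rightarrow> ('v \<times> 'v) set \<Rightarrow> real \<Rightarrow> real \<Rightarrow>
   ('v \<times> 'v) set \<times> ('v \<times> 'v) set \<times> 'v set \<Rightarrow> bool" where
  "proc_final E c U b r st \<longleftrightarrow> (proc_step E c U b r)\<^sup>*\<^sup>* ({}, {}, {}) st \<and>
     (case st of (Sr, Sf, W) \<Rightarrow> \<not> (\<exists>(s, t)\<in>U. violated E c b Sr Sf s t))"

end

theory Submission
  imports Defs
begin


inductive wk :: "'v set set \<Rightarrow> ('v set \<Rightarrow> real) \<Rightarrow> ('v \<times> 'v) set \<Rightarrow> 'v \<Rightarrow> 'v \<Rightarrow> real \<Rightarrow> bool"
  for E c S where
  wk_refl: "wk E c S a a 0"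
| wk_step: "wk E c S a b C \<Longrightarrow> {b, b'} \<in> E \<or> linked S b b' \<Longrightarrow>
     wk E c S a b' (C + (if linked S b b' then 0 else c {b, b'}))"

lemma zip_tl_snoc: "xs \<noteq> [] \<Longrightarrow> zip (xs @ [y]) (tl (xs @ [y])) = zip xs (tl xs) @ [(last xs, y)]"
  by (induction xs) (auto simp: neq_Nil_conv)

lemma walk_wk: "is_walk E S xs \<Longrightarrow> wk E c S (hd xs) (last xs) (walk_cost c S xs)"
proof (induction xs rule: rev_induct)
  case Nil then show ?case by (simp add: is_walk_def)
next
  case (snoc y xs)
  show ?case
  proof (cases "xs = []")
    case True then show ?thesis by (simp add: walk_cost_def wk_refl)
  next
    case False
    have z: "zip (xs @ [y]) (tl (xs @ [y])) = zip xs (tl xs) @ [(last xs, y)]"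
      by (rule zip_tl_snoc[OF False])
    have z2: "zip (xs @ [y]) (tl xs @ [y]) = zip xs (tl xs) @ [(last xs, y)]"
      using z False by simp
    have w: "is_walk E S xs" using snoc.prems False unfolding is_walk_def z by auto
    have st: "{last xs, y} \<in> E \<or> linked S (last xs) y" using snoc.prems unfolding is_walk_def z by auto
    from wk_step[OF snoc.IH[OF w] st] show ?thesis
      using False by (simp add: walk_cost_def z2 hd_append)
  qed
qed

lemma wk_walk: "wk E c S a b C \<Longrightarrow> \<exists>xs. is_walk E S xs \<and> hd xs = a \<and> last xs = b \<and> walk_cost c S xs = C"
proof (induction rule: wk.induct)
  case (wk_refl a)
  then show ?case by (intro exI[of _ "[a]"]) (simp add: is_walk_def walk_cost_def)
next
  case (wk_step a b C b')
  then obtain xs where xs: "is_walk E S xs" "hd xs = a" "last xs = b" "walk_cost c S xs = C" by blast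
  have ne: "xs \<noteq> []" using xs(1) by (simp add: is_walk_def)
  have z: "zip (xs @ [b']) (tl (xs @ [b'])) = zip xs (tl xs) @ [(last xs, b')]"
    by (rule zip_tl_snoc[OF ne])
  have z2: "zip (xs @ [b']) (tl xs @ [b']) = zip xs (tl xs) @ [(last xs, b')]"
    using z ne by simp
  show ?case
    apply (intro exI[of _ "xs @ [b']"])
    using xs ne wk_step.hyps(2) by (auto simp: is_walk_def walk_cost_def z2)
qed

lemma dist_wk: "dist E c S a b = (INF C\<in>{C. wk E c S a b C}. ereal C)"
proof -
  have "walk_cost c S ` {xs. is_walk E S xs \<and> hd xs = a \<and> last xs = b} = {C. wk E c S a b C}"
    using walk_wk wk_walk by fastforce
  then show ?thesis unfolding dist_def by (metis image_image)
qed

lemma wk_trans: "wk E c S b d C2 \<Longrightarrow> wk E c S a b C1 \<Longrightarrow> wk E c S a d (C1 + C2)"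
proof (induction rule: wk.induct)
  case (wk_refl a) then show ?case by simp
next
  case (wk_step b' b C b'')
  from wk.wk_step[OF wk_step.IH[OF wk_step.prems] wk_step.hyps(2)] show ?case by (simp add: add.assoc)
qed

lemma linked_sym: "linked S a b = linked S b a" by (auto simp: linked_def)

lemma wk_single: assumes "{a, b} \<in> E \<or> linked S a b" shows "wk E c S a b (if linked S a b then 0 else c {a, b})"
  using wk_step[OF wk_refl assms] by simp

lemma wk_rev: "wk E c S a b C \<Longrightarrow> wk E c S b a C"
proof (induction rule: wk.induct)
  case (wk_refl a) then show ?case by (rule wk.wk_refl)
next
  case (wk_step a b C b')
  have st: "{b', b} \<in> E \<or> linked S b' b" using wk_step.hyps(2) by (auto simp: insert_commute linked_sym)
  have e1: "(if linked S b' b then 0 else c {b', b}) = (if linked S b b' then 0 else c {b, b'})"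
    by (simp add: linked_def insert_commute)
  have "wk E c S b' a ((if linked S b' b then 0 else c {b', b}) + C)"
    by (rule wk_trans[OF wk_step.IH wk_single[OF st]])
  then show ?case unfolding e1 by (subst add.commute)
qed

lemma wk_nonneg: "wk E c S a b C \<Longrightarrow> \<forall>e\<in>E. 0 \<le> c e \<Longrightarrow> 0 \<le> C"
  by (induction rule: wk.induct) auto

lemma wk_mono: "wk E c {} a b C \<Longrightarrow> \<forall>e\<in>E. 0 \<le> c e \<Longrightarrow> \<exists>C'\<le>C. wk E c S a b C'"
proof (induction rule: wk.induct)
  case (wk_refl a) then show ?case by (intro exI[of _ 0]) (auto intro: wk.wk_refl)
next
  case (wk_step a b C b')
  then obtain C' where C': "C' \<le> C" "wk E c S a b C'" by blast
  note cn = wk_step.prems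
  have e: "{b, b'} \<in> E" using wk_step.hyps(2) by (simp add: linked_def)
  have st: "{b, b'} \<in> E \<or> linked S b b'" using e by simp
  have "C' + (if linked S b b' then 0 else c {b, b'}) \<le> C + (if linked {} b b' then 0 else c {b, b'})"
    using C'(1) cn e by (auto simp: linked_def)
  then have "C' + (if linked S b b' then 0 else c {b, b'}) \<le> C + (if linked {} b b' then 0 else c {b, b'})
     \<and> wk E c S a b' (C' + (if linked S b b' then 0 else c {b, b'}))"
    using wk.wk_step[OF C'(2) st] by (rule conjI)
  then show ?case by (rule exI)
qed

context
  fixes E :: "'v set set" and c :: "'v set \<Rightarrow> real"
  assumes cnn: "\<forall>e\<in>E. 0 \<le> c e"
begin

lemma dist_nonneg: "0 \<le> dist E c S a b"
  unfolding dist_wk using wk_nonneg[OF _ cnn] by (auto intro!: INF_greatest)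

lemma dist_le: "wk E c S a b C \<Longrightarrow> dist E c S a b \<le> ereal C"
  unfolding dist_wk by (auto intro!: INF_lower2)

lemma dist_less: "dist E c S a b < ereal r \<Longrightarrow> \<exists>C. wk E c S a b C \<and> C < r"
  unfolding dist_wk INF_less_iff by auto

lemma dist_refl: "dist E c S a a = 0"
  using dist_le[OF wk_refl, of S a] dist_nonneg[of S a a] by (simp add: zero_ereal_def)

lemma dist_sym: "dist E c S a b = dist E c S b a"
proof -
  have "{C. wk E c S a b C} = {C. wk E c S b a C}" by (auto intro: wk_rev)
  then show ?thesis unfolding dist_wk by simp
qed

lemma dist_triangle: "dist E c S a d \<le> dist E c S a b + dist E c S b d"
proof -
  let ?A = "{C. wk E c S a b C}" and ?B = "{C. wk E c S b d C}"
  have nB: "(INF j\<in>?B. ereal j) \<noteq> -\<infinity>" using dist_nonneg[of S b d] unfolding dist_wk by auto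
  show ?thesis
  proof (cases "?A = {} \<or> ?B = {}")
    case True
    have nA: "(INF j\<in>?A. ereal j) \<noteq> -\<infinity>" using dist_nonneg[of S a b] unfolding dist_wk by auto
    have X: "(INF i\<in>?A. ereal i) + (INF j\<in>?B. ereal j) = \<infinity>"
    proof (cases "?A = {}")
      case True then show ?thesis using nB by (simp add: top_ereal_def)
    next
      case False then have "?B = {}" using \<open>?A = {} \<or> ?B = {}\<close> by blast
      then show ?thesis using nA by (simp add: top_ereal_def)
    qed
    show ?thesis unfolding dist_wk X by simp
  next
    case False
    have "dist E c S a d \<le> (INF i\<in>?A. (INF j\<in>?B. ereal i + ereal j))"
      by (intro INF_greatest) (auto intro: dist_le wk_trans)
    also have "\<dots> = (INF i\<in>?A. ereal i + (INF j\<in>?B. ereal j))"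
      using False wk_nonneg[OF _ cnn] by (intro INF_cong refl INF_ereal_add_right) auto
    also have "\<dots> = (INF i\<in>?A. ereal i) + (INF j\<in>?B. ereal j)"
      using False wk_nonneg[OF _ cnn] nB by (intro INF_ereal_add_left) auto
    finally show ?thesis unfolding dist_wk .
  qed
qed

lemma dist_mono: "dist E c S a b \<le> dist E c {} a b"
  unfolding dist_wk
  by (rule INF_greatest) (use wk_mono[OF _ cnn] in \<open>force intro: INF_lower2\<close>)

lemma dist_edge: "{a, b} \<in> E \<Longrightarrow> dist E c S a b \<le> ereal (c {a, b})"
  using dist_le[OF wk_single[of a b E S c]] dist_le[OF wk_single[of a b E S c]] cnn
  by (auto split: if_splits intro: order_trans)

lemma dist_linked: "(a, b) \<in> (S \<union> S\<inverse>)\<^sup>* \<Longrightarrow> dist E c S a b = 0"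
proof (induction rule: rtrancl_induct)
  case base then show ?case by (rule dist_refl)
next
  case (step y z)
  have "linked S y z" using step.hyps(2) by (auto simp: linked_def)
  then have "dist E c S y z \<le> 0" using dist_le[OF wk_single[of y z E S c]] by (simp add: zero_ereal_def)
  then have "dist E c S a z \<le> 0" using dist_triangle[of S a z y] step.IH by simp
  then show ?case using dist_nonneg[of S a z] by simp
qed

end


lemma last_visit:
  assumes "(a, z) \<in> R\<^sup>*" "a \<noteq> z"
  shows "\<exists>a1. (a, a1) \<in> R \<and> (a1, z) \<in> {(u, v). (u, v) \<in> R \<and> u \<noteq> a \<and> v \<noteq> a}\<^sup>*"
  using assms
proof (induction rule: rtrancl_induct)
  case base then show ?case by simp
next
  case (step y z')
  show ?case
  proof (cases "y = a")
    case True then show ?thesis using step.hyps(2) by auto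
  next
    case False
    then obtain a1 where a1: "(a, a1) \<in> R" "(a1, y) \<in> {(u, v). (u, v) \<in> R \<and> u \<noteq> a \<and> v \<noteq> a}\<^sup>*"
      using step.IH by blast
    have "(y, z') \<in> {(u, v). (u, v) \<in> R \<and> u \<noteq> a \<and> v \<noteq> a}" using False step.hyps(2) step.prems by auto
    then show ?thesis using a1 by (meson rtrancl_into_rtrancl)
  qed
qed

definition del :: "'v set set \<Rightarrow> ('v set \<Rightarrow> real) \<Rightarrow> 'v \<Rightarrow> real \<Rightarrow> 'v \<Rightarrow> real" where
  "del E c x h z = (if dist E c {} x z < ereal h then real_of_ereal (dist E c {} x z) else h)"

definition mu :: "'v set set \<Rightarrow> ('v set \<Rightarrow> real) \<Rightarrow> 'v \<Rightarrow> real \<Rightarrow> 'v set \<Rightarrow> real" where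
  "mu E c x h e = min (c e) (\<Sum>z\<in>e. h - del E c x h z)"

context
  fixes E :: "'v set set" and c :: "'v set \<Rightarrow> real"
  assumes cnn: "\<forall>e\<in>E. 0 \<le> c e"
    and two: "\<forall>e\<in>E. \<exists>u v. e = {u, v} \<and> u \<noteq> v"
begin

lemma dist_fin: "dist E c S a b < ereal r \<Longrightarrow> dist E c S a b = ereal (real_of_ereal (dist E c S a b))"
  using dist_nonneg[OF cnn, of S a b] by (cases "dist E c S a b") auto

lemma del_bounds: "0 \<le> h \<Longrightarrow> 0 \<le> del E c x h z \<and> del E c x h z \<le> h"
proof (cases "dist E c {} x z < ereal h")
  case True
  define r where "r = real_of_ereal (dist E c {} x z)"
  have d: "dist E c {} x z = ereal r" using dist_fin[OF True] r_def by simp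
  have "0 \<le> r" using d dist_nonneg[OF cnn, of "{}" x z] by (simp add: zero_ereal_def)
  moreover have "r < h" using d True by simp
  ultimately show ?thesis using True unfolding del_def r_def[symmetric] by simp
qed (simp add: del_def)

lemma del_center: "0 \<le> h \<Longrightarrow> del E c x h x = 0"
  using dist_refl[OF cnn, of "{}" x] by (auto simp: del_def zero_ereal_def)

lemma del_far: "\<not> dist E c {} x z < ereal h \<Longrightarrow> del E c x h z = h"
  by (simp add: del_def)

lemma del_edge:
  assumes "{u, v} \<in> E" "0 \<le> h"
  shows "del E c x h v \<le> del E c x h u + c {u, v}"
proof (cases "dist E c {} x u < ereal h")
  case False
  have "0 \<le> c {u, v}" using cnn assms(1) by blast
  then show ?thesis using del_bounds[OF assms(2), of x v] False by (simp add: del_far)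
next
  case True
  define du where "du = real_of_ereal (dist E c {} x u)"
  have du: "dist E c {} x u = ereal du" using dist_fin[OF True] du_def by simp
  have "dist E c {} x v \<le> dist E c {} x u + dist E c {} u v" by (rule dist_triangle[OF cnn])
  also have "\<dots> \<le> ereal du + ereal (c {u, v})" using du dist_edge[OF cnn assms(1), of "{}"] by (metis add_left_mono)
  finally have dv: "dist E c {} x v \<le> ereal (du + c {u, v})" by simp
  show ?thesis
  proof (cases "dist E c {} x v < ereal h")
    case True
    define dv' where "dv' = real_of_ereal (dist E c {} x v)"
    have ev: "dist E c {} x v = ereal dv'" using dist_fin[OF True] dv'_def by simp
    have g1: "del E c x h v = dv'" unfolding del_def using True dv'_def by simp
    have g2: "del E c x h u = du" unfolding del_def using \<open>dist E c {} x u < ereal h\<close> du_def by simp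
    have "dv' \<le> du + c {u, v}" using ev dv by simp
    then show ?thesis using g1 g2 by simp
  next
    case False
    then have "h \<le> du + c {u, v}" using dv by (meson ereal_less_eq(3) not_le order_le_less_trans)
    moreover have g2: "del E c x h u = du" unfolding del_def using \<open>dist E c {} x u < ereal h\<close> du_def by simp
    ultimately show ?thesis using False by (simp add: del_far)
  qed
qed

lemma mu_nonneg: "e \<in> E \<Longrightarrow> 0 \<le> h \<Longrightarrow> 0 \<le> mu E c x h e"
  unfolding mu_def using cnn del_bounds by (auto intro!: sum_nonneg)

lemma mu_edge:
  assumes "{u, v} \<in> E" "0 \<le> h"
  shows "del E c x h v - del E c x h u \<le> mu E c x h {u, v}"
proof -
  have uv: "u \<noteq> v" using two assms(1) by (metis doubleton_eq_iff insert_absorb2)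
  have "del E c x h v - del E c x h u \<le> c {u, v}" using del_edge[OF assms, of x] by linarith
  moreover have "del E c x h v - del E c x h u \<le> (h - del E c x h u) + (h - del E c x h v)"
    using del_bounds[OF assms(2), of x v] by simp
  ultimately show ?thesis unfolding mu_def using uv by simp
qed

lemma ball_lemma:
  assumes "finite F" "F \<subseteq> E" "0 \<le> h"
  shows "(a, z) \<in> {(p, q). {p, q} \<in> F}\<^sup>* \<Longrightarrow> del E c x h z - del E c x h a \<le> (\<Sum>e\<in>F. mu E c x h e)"
  using assms(1,2)
proof (induction F arbitrary: a rule: finite_psubset_induct)
  case (psubset F)
  show ?case
  proof (cases "a = z")
    case True
    then show ?thesis using psubset.prems mu_nonneg assms(3) by (auto intro!: sum_nonneg)
  next
    case False
    obtain a1 where a1: "(a, a1) \<in> {(p, q). {p, q} \<in> F}"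
      "(a1, z) \<in> {(u, v). (u, v) \<in> {(p, q). {p, q} \<in> F} \<and> u \<noteq> a \<and> v \<noteq> a}\<^sup>*"
      using last_visit[OF psubset.prems(1) False] by blast
    define F' where "F' = {e \<in> F. a \<notin> e}"
    have sub: "{(u, v). (u, v) \<in> {(p, q). {p, q} \<in> F} \<and> u \<noteq> a \<and> v \<noteq> a} \<subseteq> {(p, q). {p, q} \<in> F'}"
      unfolding F'_def by auto
    have r: "(a1, z) \<in> {(p, q). {p, q} \<in> F'}\<^sup>*" using rtrancl_mono[OF sub] a1(2) by blast
    have ea: "{a, a1} \<in> F" using a1(1) by simp
    have ps: "F' \<subset> F" using ea unfolding F'_def by auto
    have IH: "del E c x h z - del E c x h a1 \<le> (\<Sum>e\<in>F'. mu E c x h e)"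
      using psubset.IH[OF ps r] psubset.prems(2) ps by auto
    have "(\<Sum>e\<in>F. mu E c x h e) = (\<Sum>e\<in>F'. mu E c x h e) + (\<Sum>e\<in>F - F'. mu E c x h e)"
      using ps psubset.hyps by (metis add.commute psubset_imp_subset sum.subset_diff)
    moreover have "mu E c x h {a, a1} \<le> (\<Sum>e\<in>F - F'. mu E c x h e)"
      using ea psubset.hyps psubset.prems(2) mu_nonneg[OF _ assms(3)] unfolding F'_def
      by (intro member_le_sum) auto
    moreover have "del E c x h a1 - del E c x h a \<le> mu E c x h {a, a1}"
      using mu_edge[of a a1 h x] ea psubset.prems(2) assms(3) by auto
    ultimately show ?thesis using IH by linarith
  qed
qed

lemma packing:
  assumes X: "finite X" "\<forall>x\<in>X. \<forall>x'\<in>X. x \<noteq> x' \<longrightarrow> \<not> dist E c {} x x' < ereal (2 * h)"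
    and e: "e \<in> E" and h: "0 \<le> h"
  shows "(\<Sum>x\<in>X. mu E c x h e) \<le> c e"
proof -
  obtain u v where uv: "e = {u, v}" "u \<noteq> v" using two e by blast
  have near1: "x = x'" if "x \<in> X" "x' \<in> X" "dist E c {} x w < ereal h" "dist E c {} x' w < ereal h" for x x' w
  proof (rule ccontr)
    assume ne: "x \<noteq> x'"
    define ra where "ra = real_of_ereal (dist E c {} x w)"
    define rb where "rb = real_of_ereal (dist E c {} x' w)"
    have a: "dist E c {} x w = ereal ra" using dist_fin that(3) ra_def by simp
    have b: "dist E c {} x' w = ereal rb" using dist_fin that(4) rb_def by simp
    have "ra < h" "rb < h" using a b that(3,4) by auto
    have "dist E c {} x x' \<le> dist E c {} x w + dist E c {} w x'" by (rule dist_triangle[OF cnn])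
    also have "\<dots> = dist E c {} x w + dist E c {} x' w" using dist_sym[OF cnn] by simp
    also have "\<dots> < ereal (2 * h)" using a b \<open>ra < h\<close> \<open>rb < h\<close> by simp
    finally show False using X(2) that(1,2) ne by blast
  qed
  define Xu where "Xu = {x \<in> X. dist E c {} x u < ereal h}"
  define Xv where "Xv = {x \<in> X. dist E c {} x v < ereal h}"
  have zero: "mu E c x h e = 0" if "x \<notin> Xu \<union> Xv" "x \<in> X" for x
    using that uv del_far[of x u h] del_far[of x v h] cnn e unfolding mu_def Xu_def Xv_def by auto
  have sumeq: "(\<Sum>x\<in>X. mu E c x h e) = (\<Sum>x\<in>Xu \<union> Xv. mu E c x h e)"
    using zero X(1) by (intro sum.mono_neutral_right) (auto simp: Xu_def Xv_def)
  have Xu1: "Xu = {} \<or> (\<exists>x. Xu = {x})" using near1 unfolding Xu_def by blast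
  have Xv1: "Xv = {} \<or> (\<exists>x. Xv = {x})" using near1 unfolding Xv_def by blast
  have mule: "mu E c x h e \<le> c e" for x unfolding mu_def by simp
  have mux: "mu E c x h e \<le> (h - del E c x h u) + (h - del E c x h v)" for x
    unfolding mu_def using uv by simp
  show ?thesis
  proof (cases "\<exists>x0. Xu \<union> Xv \<subseteq> {x0}")
    case True
    then obtain x0 where "Xu \<union> Xv \<subseteq> {x0}" by blast
    then have "Xu \<union> Xv = {} \<or> Xu \<union> Xv = {x0}" by blast
    then show ?thesis using sumeq mule[of x0] cnn e by auto
  next
    case False
    then obtain x1 x2 where x12: "Xu = {x1}" "Xv = {x2}" "x1 \<noteq> x2" using Xu1 Xv1 by auto
    have x1: "x1 \<in> X" "dist E c {} x1 u < ereal h" "x1 \<notin> Xv" using x12 unfolding Xu_def by auto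
    have x2: "x2 \<in> X" "dist E c {} x2 v < ereal h" "x2 \<notin> Xu" using x12 unfolding Xv_def by auto
    have f1: "del E c x1 h v = h" using x1(1,3) del_far unfolding Xv_def by auto
    have f2: "del E c x2 h u = h" using x2(1,3) del_far unfolding Xu_def by auto
    define d1 where "d1 = real_of_ereal (dist E c {} x1 u)"
    define d2 where "d2 = real_of_ereal (dist E c {} x2 v)"
    have d1: "dist E c {} x1 u = ereal d1" using dist_fin x1(2) d1_def by simp
    have d2: "dist E c {} x2 v = ereal d2" using dist_fin x2(2) d2_def by simp
    have g1: "del E c x1 h u = d1" using x1(2) d1_def unfolding del_def by simp
    have g2: "del E c x2 h v = d2" using x2(2) d2_def unfolding del_def by simp
    have "dist E c {} x1 x2 \<le> dist E c {} x1 u + dist E c {} u x2" by (rule dist_triangle[OF cnn])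
    also have "dist E c {} u x2 \<le> dist E c {} u v + dist E c {} v x2" by (rule dist_triangle[OF cnn])
    also have "dist E c {} v x2 = ereal d2" using d2 dist_sym[OF cnn] by simp
    also have "dist E c {} u v \<le> ereal (c e)" using dist_edge[OF cnn] e uv(1) by simp
    finally have "dist E c {} x1 x2 \<le> ereal (d1 + c e + d2)"
      using d1 by (simp add: add_mono add.assoc)
    moreover have "\<not> dist E c {} x1 x2 < ereal (2 * h)" using X(2) x1(1) x2(1) x12(3) by blast
    ultimately have "2 * h \<le> d1 + c e + d2" by (meson ereal_less_eq(3) not_le order_le_less_trans)
    then have "mu E c x1 h e + mu E c x2 h e \<le> c e" using mux[of x1] mux[of x2] f1 f2 g1 g2 by linarith
    then show ?thesis using sumeq x12 by simp
  qed
qed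

end


lemma sum_Un_le_nn:
  fixes f :: "'a \<Rightarrow> real"
  assumes "finite A" "finite B" "\<forall>x\<in>A \<inter> B. 0 \<le> f x"
  shows "sum f (A \<union> B) \<le> sum f A + sum f B"
  using sum_Un[OF assms(1,2), of f] sum_nonneg[of "A \<inter> B" f] assms(3) by simp

lemma sum_UN_le_nn:
  fixes f :: "'a \<Rightarrow> real"
  assumes "finite I" "\<forall>i\<in>I. finite (g i)" "\<forall>i\<in>I. \<forall>x\<in>g i. 0 \<le> f x"
  shows "sum f (\<Union>i\<in>I. g i) \<le> (\<Sum>i\<in>I. sum f (g i))"
  using assms
proof (induction I rule: finite_induct)
  case empty then show ?case by simp
next
  case (insert i I)
  have "sum f (\<Union>j\<in>insert i I. g j) = sum f (g i \<union> (\<Union>j\<in>I. g j))" by simp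
  also have "\<dots> \<le> sum f (g i) + sum f (\<Union>j\<in>I. g j)"
    using insert by (intro sum_Un_le_nn) auto
  also have "\<dots> \<le> sum f (g i) + (\<Sum>j\<in>I. sum f (g j))" using insert by simp
  finally show ?case using insert by simp
qed

lemma graph_edge: "graph V E \<Longrightarrow> e \<in> E \<Longrightarrow> \<exists>u v. e = {u, v} \<and> u \<in> V \<and> v \<in> V \<and> u \<noteq> v"
  unfolding graph_def by (erule conjE) (erule bspec)

lemma graph_finite_E: "graph V E \<Longrightarrow> finite E"
proof -
  assume g: "graph V E"
  have "E \<subseteq> Pow V"
  proof
    fix e assume "e \<in> E"
    have "\<exists>u v. e = {u, v} \<and> u \<in> V \<and> v \<in> V \<and> u \<noteq> v" using graph_edge[OF g \<open>e \<in> E\<close>] .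
    then show "e \<in> Pow V" by (elim exE conjE) simp
  qed
  moreover have "finite V" using g unfolding graph_def by (rule conjunct1)
  ultimately show "finite E" by (meson finite_Pow_iff finite_subset)
qed

lemma connects_mono: "connects F s t \<Longrightarrow> F \<subseteq> F' \<Longrightarrow> connects F' s t"
  unfolding connects_def by (erule rtrancl_mono[THEN subsetD, rotated]) auto

lemma connects_sym: "connects F s t \<Longrightarrow> connects F t s"
proof -
  assume a: "connects F s t"
  have "{(a, b). {a, b} \<in> F}\<inverse> = {(a, b). {a, b} \<in> F}" by (auto simp: insert_commute)
  then show ?thesis using rtrancl_converseI[of s t "{(a, b). {a, b} \<in> F}"] a unfolding connects_def by simp
qed

lemma cover:
  assumes U: "finite U" "1 \<le> k" "k \<le> card U"
  shows "A \<subseteq> U \<Longrightarrow> \<exists>DD. DD \<subseteq> scenarios U k \<and> finite DD \<and> card DD * k \<le> card A + k - 1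
           \<and> (\<forall>a\<in>A. \<exists>D\<in>DD. a \<in> D)"
proof (induction "card A" arbitrary: A rule: less_induct)
  case less
  have fA: "finite A" using less.prems U(1) finite_subset by blast
  show ?case
  proof (cases "A = {}")
    case True then show ?thesis by (intro exI[of _ "{}"]) auto
  next
    case ne: False
    show ?thesis
    proof (cases "card A \<le> k")
      case True
      have "k - card A \<le> card (U - A)" using card_Diff_subset[OF fA less.prems] U by simp
      then obtain T where T: "T \<subseteq> U - A" "card T = k - card A" "finite T"
        by (rule obtain_subset_with_card_n)
      have "card (A \<union> T) = card A + card T" using T fA by (intro card_Un_disjoint) auto
      then have "card (A \<union> T) = k" using T True by simp
      then have "A \<union> T \<in> scenarios U k" using T less.prems unfolding scenarios_def by auto
      moreover have "card A \<ge> 1" using ne fA by (simp add: Suc_le_eq card_gt_0_iff)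
      ultimately show ?thesis by (intro exI[of _ "{A \<union> T}"]) auto
    next
      case False
      then obtain B where B: "B \<subseteq> A" "card B = k" "finite B"
        using obtain_subset_with_card_n[of k A] by (metis nat_le_linear)
      have cA': "card (A - B) = card A - k" using card_Diff_subset[OF B(3,1)] B(2) by simp
      then have "card (A - B) < card A" using U(2) False by simp
      then obtain DD where DD: "DD \<subseteq> scenarios U k" "finite DD" "card DD * k \<le> card (A - B) + k - 1"
        "\<forall>a\<in>A - B. \<exists>D\<in>DD. a \<in> D"
        using less.hyps[of "A - B"] less.prems by blast
      have Bs: "B \<in> scenarios U k" using B less.prems unfolding scenarios_def by auto
      have "card (insert B DD) \<le> card DD + 1" using card_insert_le_m1[of 1 DD B] DD(2) by (simp add: card_insert_if)
      then have "card (insert B DD) * k \<le> (card DD + 1) * k" by (rule mult_right_mono) simp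
      also have "\<dots> \<le> card A + k - 1" using DD(3) cA' False by (simp add: algebra_simps)
      finally show ?thesis using DD Bs by (intro exI[of _ "insert B DD"]) auto
    qed
  qed
qed

context
  fixes V :: "'v set" and E :: "'v set set" and c :: "'v set \<Rightarrow> real" and U :: "('v \<times> 'v) set"
    and k :: nat and E0 :: "'v set set" and ED :: "('v \<times> 'v) set \<Rightarrow> 'v set set"
  assumes g: "graph V E" and cnn: "\<forall>e\<in>E. 0 \<le> c e"
    and feas: "robust_feasible E U k E0 ED"
begin

lemma fE: "finite E" using graph_finite_E[OF g] .

lemma E0E: "E0 \<subseteq> E" using feas unfolding robust_feasible_def by blast

lemma EDE: "D \<in> scenarios U k \<Longrightarrow> ED D \<subseteq> E" using feas unfolding robust_feasible_def by blast

lemma EDconn: "D \<in> scenarios U k \<Longrightarrow> (s, t) \<in> D \<Longrightarrow> connects (E0 \<union> ED D) s t"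
  using feas unfolding robust_feasible_def by blast

lemma opt_upper:
  assumes DD: "DD \<subseteq> scenarios U k" "finite DD" "\<forall>a\<in>P. \<exists>D\<in>DD. a \<in> D"
  shows "steiner_opt E c P \<le> sum c E0 + (\<Sum>D\<in>DD. sum c (ED D))"
proof -
  define F0 where "F0 = E0 \<union> (\<Union>D\<in>DD. ED D)"
  have F0E: "F0 \<subseteq> E" unfolding F0_def using E0E EDE DD(1) by blast
  have "steiner_forest E P F0"
    unfolding steiner_forest_def
  proof (intro conjI F0E ballI)
    fix st assume "st \<in> P"
    then obtain D where D: "D \<in> DD" "st \<in> D" using DD(3) by blast
    obtain s t where st: "st = (s, t)" by fastforce
    have "connects (E0 \<union> ED D) s t" using EDconn[of D s t] D DD(1) st by blast
    moreover have "E0 \<union> ED D \<subseteq> F0" using D unfolding F0_def by blast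
    ultimately have "connects F0 s t" by (rule connects_mono)
    then show "case st of (s, t) \<Rightarrow> connects F0 s t" using st by simp
  qed
  then have "steiner_opt E c P \<le> sum c F0"
    unfolding steiner_opt_def
  proof (intro cInf_lower)
    show "bdd_below {sum c F |F. steiner_forest E P F}"
      by (rule bdd_belowI[of _ 0]) (use cnn in \<open>auto simp: steiner_forest_def intro!: sum_nonneg\<close>)
  qed auto
  also have "sum c F0 \<le> sum c E0 + sum c (\<Union>D\<in>DD. ED D)"
    unfolding F0_def using fE E0E EDE DD(1) cnn
    by (intro sum_Un_le_nn) (auto intro: finite_subset)
  also have "sum c (\<Union>D\<in>DD. ED D) \<le> (\<Sum>D\<in>DD. sum c (ED D))"
  proof (intro sum_UN_le_nn DD(2) ballI)
    fix D assume D: "D \<in> DD"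
    then have "ED D \<subseteq> E" using EDE DD(1) by blast
    then show "finite (ED D)" using fE finite_subset by blast
    fix x assume "x \<in> ED D"
    then show "0 \<le> c x" using \<open>ED D \<subseteq> E\<close> cnn by blast
  qed
  finally show ?thesis by simp
qed

lemma two_E: "\<forall>e\<in>E. \<exists>u v. e = {u, v} \<and> u \<noteq> v"
proof
  fix e assume "e \<in> E"
  have "\<exists>u v. e = {u, v} \<and> u \<in> V \<and> v \<in> V \<and> u \<noteq> v" using graph_edge[OF g \<open>e \<in> E\<close>] .
  then show "\<exists>u v. e = {u, v} \<and> u \<noteq> v" by (elim exE conjE) (intro exI conjI)
qed

lemma robust_lower:
  assumes h: "0 \<le> h" and fW: "finite W"
    and pw: "\<forall>x\<in>W. \<forall>x'\<in>W. x \<noteq> x' \<longrightarrow> \<not> dist E c {} x x' < ereal (2 * h)"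
    and DD: "DD \<subseteq> scenarios U k" "finite DD"
    and j: "\<forall>x\<in>W. j x \<in> DD \<and> (\<exists>y. ((x, y) \<in> j x \<or> (y, x) \<in> j x) \<and> \<not> dist E c {} x y < ereal h)"
  shows "real (card W) * h \<le> sum c E0 + (\<Sum>D\<in>DD. sum c (ED D))"
proof -
  let ?mu = "\<lambda>x e. mu E c x h e"
  have each: "h \<le> (\<Sum>e\<in>E0. ?mu x e) + (\<Sum>e\<in>ED (j x). ?mu x e)" if x: "x \<in> W" for x
  proof -
    obtain y where y: "(x, y) \<in> j x \<or> (y, x) \<in> j x" "\<not> dist E c {} x y < ereal h" using j x by blast
    have jx: "j x \<in> scenarios U k" using j x DD(1) by blast
    have con: "connects (E0 \<union> ED (j x)) x y"
      using y(1)
    proof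
      assume "(x, y) \<in> j x" then show ?thesis by (rule EDconn[OF jx])
    next
      assume "(y, x) \<in> j x" then show ?thesis by (rule connects_sym[OF EDconn[OF jx]])
    qed
    have FE: "E0 \<union> ED (j x) \<subseteq> E" using E0E EDE[OF jx] by blast
    have fF: "finite (E0 \<union> ED (j x))" using FE fE finite_subset by blast
    have "del E c x h y - del E c x h x \<le> (\<Sum>e\<in>E0 \<union> ED (j x). ?mu x e)"
      using ball_lemma[OF cnn two_E fF FE h] con unfolding connects_def by blast
    moreover have "del E c x h y = h" using y(2) by (simp add: del_def)
    moreover have "del E c x h x = 0" using del_center[OF cnn two_E h] .
    moreover have "(\<Sum>e\<in>E0 \<union> ED (j x). ?mu x e) \<le> (\<Sum>e\<in>E0. ?mu x e) + (\<Sum>e\<in>ED (j x). ?mu x e)"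
      using FE fE mu_nonneg[OF cnn two_E _ h] by (intro sum_Un_le_nn) (auto intro: finite_subset)
    ultimately show ?thesis by linarith
  qed
  have "real (card W) * h = (\<Sum>x\<in>W. h)" by simp
  also have "\<dots> \<le> (\<Sum>x\<in>W. (\<Sum>e\<in>E0. ?mu x e) + (\<Sum>e\<in>ED (j x). ?mu x e))"
    using each by (rule sum_mono)
  also have "\<dots> = (\<Sum>x\<in>W. \<Sum>e\<in>E0. ?mu x e) + (\<Sum>x\<in>W. \<Sum>e\<in>ED (j x). ?mu x e)"
    by (rule sum.distrib)
  also have "(\<Sum>x\<in>W. \<Sum>e\<in>E0. ?mu x e) \<le> sum c E0"
  proof -
    have "(\<Sum>x\<in>W. \<Sum>e\<in>E0. ?mu x e) = (\<Sum>e\<in>E0. \<Sum>x\<in>W. ?mu x e)" by (rule sum.swap)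
    also have "\<dots> \<le> sum c E0"
      using packing[OF cnn two_E fW pw _ h] E0E by (intro sum_mono) auto
    finally show ?thesis .
  qed
  also have "(\<Sum>x\<in>W. \<Sum>e\<in>ED (j x). ?mu x e) \<le> (\<Sum>D\<in>DD. sum c (ED D))"
  proof -
    have "(\<Sum>x\<in>W. \<Sum>e\<in>ED (j x). ?mu x e)
        = (\<Sum>D\<in>j ` W. \<Sum>x\<in>{x \<in> W. j x = D}. \<Sum>e\<in>ED (j x). ?mu x e)"
      by (rule sum.image_gen[OF fW])
    also have "\<dots> = (\<Sum>D\<in>j ` W. \<Sum>x\<in>{x \<in> W. j x = D}. \<Sum>e\<in>ED D. ?mu x e)"
      by (intro sum.cong refl) auto
    also have "\<dots> = (\<Sum>D\<in>j ` W. \<Sum>e\<in>ED D. \<Sum>x\<in>{x \<in> W. j x = D}. ?mu x e)"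
      by (intro sum.cong refl sum.swap)
    also have "\<dots> \<le> (\<Sum>D\<in>j ` W. sum c (ED D))"
    proof (intro sum_mono)
      fix D e assume D: "D \<in> j ` W" and e: "e \<in> ED D"
      have "D \<in> scenarios U k" using D j DD(1) by blast
      then have eE: "e \<in> E" using EDE e by blast
      have pw': "\<forall>x\<in>{x \<in> W. j x = D}. \<forall>x'\<in>{x \<in> W. j x = D}. x \<noteq> x' \<longrightarrow> \<not> dist E c {} x x' < ereal (2 * h)"
        using pw by blast
      show "(\<Sum>x\<in>{x \<in> W. j x = D}. ?mu x e) \<le> c e"
        using packing[OF cnn two_E _ pw' eE h] fW by simp
    qed
    also have "\<dots> \<le> (\<Sum>D\<in>DD. sum c (ED D))"
    proof (rule sum_mono2[OF DD(2)])
      show "j ` W \<subseteq> DD" using j by blast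
      fix D assume "D \<in> DD - j ` W"
      then have "D \<in> scenarios U k" using DD(1) by blast
      then show "0 \<le> sum c (ED D)" using EDE cnn by (auto intro!: sum_nonneg)
    qed
    finally show ?thesis .
  qed
  finally show ?thesis by simp
qed

end


definition LL :: "('v \<times> 'v) set \<Rightarrow> ('v \<times> 'v) set" where
  "LL S = (S \<union> S\<inverse>)\<^sup>*"

lemma LL_sym: "(a, b) \<in> LL S \<Longrightarrow> (b, a) \<in> LL S"
proof -
  assume "(a, b) \<in> LL S"
  moreover have "(S \<union> S\<inverse>)\<inverse> = S \<union> S\<inverse>" by auto
  ultimately show ?thesis using rtrancl_converseI[of a b "S \<union> S\<inverse>"] unfolding LL_def by simp
qed

lemma LL_mono: "S \<subseteq> S' \<Longrightarrow> LL S \<subseteq> LL S'"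
  unfolding LL_def by (rule rtrancl_mono) auto

lemma LL_base: "(a, b) \<in> S \<Longrightarrow> (a, b) \<in> LL S"
  unfolding LL_def by auto

lemma LL_base': "(a, b) \<in> S \<Longrightarrow> (b, a) \<in> LL S"
  unfolding LL_def by auto

lemma LL_trans: "(a, b) \<in> LL S \<Longrightarrow> (b, d) \<in> LL S \<Longrightarrow> (a, d) \<in> LL S"
  unfolding LL_def by (rule rtrancl_trans)

lemma LL_refl: "(a, a) \<in> LL S"
  unfolding LL_def by simp

lemma cins: "finite A \<Longrightarrow> card (insert x A) \<le> card A + 1"
  by (simp add: card_insert_if)

lemma cover_ins:
  assumes "\<forall>x\<in>W. \<exists>st\<in>Sr. x = fst st \<or> x = snd st" "Sr \<subseteq> Sr'" "(s, t) \<in> Sr'"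
    "W' \<subseteq> insert s (insert t W)"
  shows "\<forall>x\<in>W'. \<exists>st\<in>Sr'. x = fst st \<or> x = snd st"
proof
  fix x assume x: "x \<in> W'"
  show "\<exists>st\<in>Sr'. x = fst st \<or> x = snd st"
  proof (cases "x = s \<or> x = t")
    case True then show ?thesis using assms(3) by (intro bexI[of _ "(s, t)"]) auto
  next
    case False
    then have "x \<in> W" using x assms(4) by blast
    then obtain st where "st \<in> Sr" "x = fst st \<or> x = snd st" using assms(1) by blast
    then show ?thesis using assms(2) by blast
  qed
qed

definition pwf :: "'v set set \<Rightarrow> ('v set \<Rightarrow> real) \<Rightarrow> real \<Rightarrow> 'v set \<Rightarrow> bool" where
  "pwf E c r W \<longleftrightarrow> (\<forall>w\<in>W. \<forall>w'\<in>W. w \<noteq> w' \<longrightarrow> \<not> dist E c {} w w' < ereal r)"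

definition Inv :: "'v set set \<Rightarrow> ('v set \<Rightarrow> real) \<Rightarrow> ('v \<times> 'v) set \<Rightarrow> real \<Rightarrow> real \<Rightarrow>
    ('v \<times> 'v) set \<Rightarrow> ('v \<times> 'v) set \<Rightarrow> 'v set \<Rightarrow> bool" where
  "Inv E c U b r Sr Sf W \<longleftrightarrow>
     finite Sr \<and> finite Sf \<and> finite W \<and> Sr \<subseteq> U \<and>
     card Sf + card W \<le> 2 * card Sr \<and>
     (\<forall>st\<in>Sr. ereal b < dist E c {} (fst st) (snd st)) \<and>
     (\<forall>x\<in>W. \<exists>st\<in>Sr. x = fst st \<or> x = snd st) \<and>
     pwf E c r W \<and>
     (\<forall>p\<in>Sf. dist E c {} (fst p) (snd p) < ereal r) \<and>
     (0 < r \<longrightarrow> (\<exists>rep. (\<forall>w\<in>W. rep w \<in> W \<and> (w, rep w) \<in> LL (Sr \<union> Sf)) \<and>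
                        card Sr + card (rep ` W) \<le> card W))"

context
  fixes E :: "'v set set" and c :: "'v set \<Rightarrow> real" and U :: "('v \<times> 'v) set" and b r :: real
  assumes cnn: "\<forall>e\<in>E. 0 \<le> c e" and r0: "0 \<le> r" and br: "2 * r \<le> b"
begin

lemma dist_fin2: "dist E c S a a2 < ereal q \<Longrightarrow> dist E c S a a2 = ereal (real_of_ereal (dist E c S a a2))"
  using dist_nonneg[OF cnn, of S a a2] by (cases "dist E c S a a2") auto

lemma pwf_insert: "pwf E c r W \<Longrightarrow> \<forall>w\<in>W. \<not> dist E c {} x w < ereal r \<Longrightarrow> pwf E c r (insert x W)"
  unfolding pwf_def
proof (intro ballI impI)
  fix w w' assume a: "\<forall>w\<in>W. \<forall>w'\<in>W. w \<noteq> w' \<longrightarrow> \<not> dist E c {} w w' < ereal r"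
    "\<forall>w\<in>W. \<not> dist E c {} x w < ereal r" and w: "w \<in> insert x W" "w' \<in> insert x W" "w \<noteq> w'"
  show "\<not> dist E c {} w w' < ereal r"
  proof (cases "w = x")
    case True then show ?thesis using a w by auto
  next
    case False
    show ?thesis
    proof (cases "w' = x")
      case True then show ?thesis using a w False dist_sym[OF cnn, of "{}" w x] by auto
    next
      case False then show ?thesis using a w \<open>w \<noteq> x\<close> by auto
    qed
  qed
qed

lemma Inv_init: "Inv E c U b r {} {} {}"
  unfolding Inv_def pwf_def by (auto intro!: exI[of _ id])

lemma Inv_step:
  assumes I: "Inv E c U b r Sr Sf W"
    and st: "proc_step E c U b r (Sr, Sf, W) (Sr', Sf', W')"
  shows "Inv E c U b r Sr' Sf' W'"
proof -
  obtain s t mid where stU: "(s, t) \<in> U" and viol: "violated E c b Sr Sf s t"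
    and Sr': "Sr' = insert (s, t) Sr"
    and p1: "proc_terminal E c r s (Sf, W) mid" and p2: "proc_terminal E c r t mid (Sf', W')"
    using st unfolding proc_step_def by auto
  from I have fSr: "finite Sr" and fSf: "finite Sf" and fW: "finite W" and SrU: "Sr \<subseteq> U"
    and cards: "card Sf + card W \<le> 2 * card Sr"
    and I3: "\<forall>st\<in>Sr. ereal b < dist E c {} (fst st) (snd st)"
    and I4: "\<forall>x\<in>W. \<exists>st\<in>Sr. x = fst st \<or> x = snd st"
    and I5: "pwf E c r W"
    and I6: "\<forall>p\<in>Sf. dist E c {} (fst p) (snd p) < ereal r"
    and I7: "0 < r \<longrightarrow> (\<exists>rep. (\<forall>w\<in>W. rep w \<in> W \<and> (w, rep w) \<in> LL (Sr \<union> Sf)) \<and>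
                        card Sr + card (rep ` W) \<le> card W)"
    unfolding Inv_def by blast+
  let ?S = "Sr \<union> Sf"
  have vd: "ereal b < dist E c ?S s t" using viol unfolding violated_def .
  have b0: "0 \<le> b" using r0 br by simp
  have dG: "ereal b < dist E c {} s t" using vd dist_mono[OF cnn, of ?S s t] by simp
  have rb: "ereal r \<le> ereal b" using br r0 by simp
  have dGr1: "\<not> dist E c {} s t < ereal r"
  proof
    assume "dist E c {} s t < ereal r"
    then have "dist E c {} s t < ereal b" using rb by (rule order_less_le_trans)
    then show False using dG by simp
  qed
  have dGr: "\<not> dist E c {} s t < ereal r" "\<not> dist E c {} t s < ereal r"
    using dGr1 dist_sym[OF cnn, of "{}" s t] by auto
  have nSr: "(s, t) \<notin> Sr"
  proof
    assume "(s, t) \<in> Sr"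
    then have "(s, t) \<in> LL ?S" by (intro LL_base) auto
    then have "dist E c ?S s t = 0" using dist_linked[OF cnn] unfolding LL_def by blast
    then show False using vd b0 by (simp add: zero_ereal_def)
  qed
  have cSr': "card Sr' = card Sr + 1" using nSr fSr Sr' by simp
  have fSr': "finite Sr'" using fSr Sr' by simp
  have Sr'U: "Sr' \<subseteq> U" using SrU stU Sr' by simp
  have I3': "\<forall>st\<in>Sr'. ereal b < dist E c {} (fst st) (snd st)" using I3 dG Sr' by auto
  have sSr': "(s, t) \<in> Sr'" using Sr' by simp
  have SrSr': "Sr \<subseteq> Sr'" using Sr' by auto
  from p1 consider
      (sF) w where "w \<in> W" "dist E c {} s w < ereal r" "mid = (insert (s, w) Sf, W)"
    | (sW) "\<forall>w\<in>W. \<not> dist E c {} s w < ereal r" "mid = (Sf, insert s W)"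
    unfolding proc_terminal_def by auto
  then show ?thesis
  proof cases
    case sW
    from p2 sW(2) consider
        (tF) w' where "w' \<in> insert s W" "dist E c {} t w' < ereal r" "Sf' = insert (t, w') Sf" "W' = insert s W"
      | (tW) "\<forall>w\<in>insert s W. \<not> dist E c {} t w < ereal r" "Sf' = Sf" "W' = insert t (insert s W)"
      unfolding proc_terminal_def by auto
    then show ?thesis
    proof cases
      case tF
      have w'W: "w' \<in> W" using tF(1,2) dGr(2) by auto
      show ?thesis unfolding Inv_def
      proof (intro conjI)
        show "finite Sr'" "finite Sf'" "finite W'" "Sr' \<subseteq> U" using fSr' fSf fW tF Sr'U by auto
        show "card Sf' + card W' \<le> 2 * card Sr'"
          using cins[OF fSf, of "(t, w')"] cins[OF fW, of s] cards cSr' tF by simp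
        show "\<forall>st\<in>Sr'. ereal b < dist E c {} (fst st) (snd st)" by (rule I3')
        show "\<forall>x\<in>W'. \<exists>st\<in>Sr'. x = fst st \<or> x = snd st" using tF(4) by (intro cover_ins[OF I4 SrSr' sSr']) auto
        show "pwf E c r W'" using pwf_insert[OF I5 sW(1)] tF(4) by simp
        show "\<forall>p\<in>Sf'. dist E c {} (fst p) (snd p) < ereal r" using I6 tF(2,3) by auto
        show "0 < r \<longrightarrow> (\<exists>rep. (\<forall>w\<in>W'. rep w \<in> W' \<and> (w, rep w) \<in> LL (Sr' \<union> Sf')) \<and>
                        card Sr' + card (rep ` W') \<le> card W')"
        proof
          assume "0 < r"
          then obtain rep where rep: "\<forall>w\<in>W. rep w \<in> W \<and> (w, rep w) \<in> LL ?S"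
            "card Sr + card (rep ` W) \<le> card W" using I7 by blast
          have sW': "s \<notin> W" using sW(1) dist_refl[OF cnn, of "{}" s] \<open>0 < r\<close> by (auto simp: zero_ereal_def)
          define rep' where "rep' = rep(s := rep w')"
          have mono: "LL ?S \<subseteq> LL (Sr' \<union> Sf')" using SrSr' tF(3) by (intro LL_mono) auto
          have l1: "(s, t) \<in> LL (Sr' \<union> Sf')" using sSr' by (intro LL_base) auto
          have l2: "(t, w') \<in> LL (Sr' \<union> Sf')" using tF(3) by (intro LL_base) auto
          have l3: "(w', rep w') \<in> LL (Sr' \<union> Sf')" using rep(1) w'W mono by blast
          have A: "\<forall>v\<in>W'. rep' v \<in> W' \<and> (v, rep' v) \<in> LL (Sr' \<union> Sf')"
          proof
            fix v assume v: "v \<in> W'"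
            show "rep' v \<in> W' \<and> (v, rep' v) \<in> LL (Sr' \<union> Sf')"
            proof (cases "v = s")
              case True
              then show ?thesis using rep(1) w'W tF(4) LL_trans[OF l1 LL_trans[OF l2 l3]] unfolding rep'_def by auto
            next
              case False
              then have "v \<in> W" using v tF(4) by simp
              then show ?thesis using rep(1) mono tF(4) False unfolding rep'_def by auto
            qed
          qed
          have "rep' ` W' = rep ` W"
          proof -
            have "rep' ` W = rep ` W" unfolding rep'_def using sW' by (intro image_cong) auto
            then show ?thesis using tF(4) w'W unfolding rep'_def by auto
          qed
          then have "card Sr' + card (rep' ` W') \<le> card W'"
            using rep(2) cSr' tF(4) sW' fW by simp
          then show "\<exists>rep. (\<forall>w\<in>W'. rep w \<in> W' \<and> (w, rep w) \<in> LL (Sr' \<union> Sf')) \<and>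
                        card Sr' + card (rep ` W') \<le> card W'" using A by blast
        qed
      qed
    next
      case tW
      show ?thesis unfolding Inv_def
      proof (intro conjI)
        show "finite Sr'" "finite Sf'" "finite W'" "Sr' \<subseteq> U" using fSr' fSf fW tW Sr'U by auto
        show "card Sf' + card W' \<le> 2 * card Sr'"
          using cins[OF fW, of s] cins[of "insert s W" t] fW cards cSr' tW by simp
        show "\<forall>st\<in>Sr'. ereal b < dist E c {} (fst st) (snd st)" by (rule I3')
        show "\<forall>x\<in>W'. \<exists>st\<in>Sr'. x = fst st \<or> x = snd st" using tW(3) by (intro cover_ins[OF I4 SrSr' sSr']) auto
        show "pwf E c r W'" using pwf_insert[OF pwf_insert[OF I5 sW(1)] tW(1)] tW(3) by simp
        show "\<forall>p\<in>Sf'. dist E c {} (fst p) (snd p) < ereal r" using I6 tW(2) by auto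
        show "0 < r \<longrightarrow> (\<exists>rep. (\<forall>w\<in>W'. rep w \<in> W' \<and> (w, rep w) \<in> LL (Sr' \<union> Sf')) \<and>
                        card Sr' + card (rep ` W') \<le> card W')"
        proof
          assume "0 < r"
          then obtain rep where rep: "\<forall>w\<in>W. rep w \<in> W \<and> (w, rep w) \<in> LL ?S"
            "card Sr + card (rep ` W) \<le> card W" using I7 by blast
          have sW': "s \<notin> W" using sW(1) dist_refl[OF cnn, of "{}" s] \<open>0 < r\<close> by (auto simp: zero_ereal_def)
          have tW': "t \<notin> insert s W" using tW(1) dist_refl[OF cnn, of "{}" t] \<open>0 < r\<close> by (auto simp: zero_ereal_def)
          define rep' where "rep' = rep(s := s, t := s)"
          have mono: "LL ?S \<subseteq> LL (Sr' \<union> Sf')" using SrSr' tW(2) by (intro LL_mono) auto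
          have l1: "(t, s) \<in> LL (Sr' \<union> Sf')" using sSr' by (intro LL_base') auto
          have A: "\<forall>v\<in>W'. rep' v \<in> W' \<and> (v, rep' v) \<in> LL (Sr' \<union> Sf')"
          proof
            fix v assume v: "v \<in> W'"
            show "rep' v \<in> W' \<and> (v, rep' v) \<in> LL (Sr' \<union> Sf')"
            proof (cases "v = s \<or> v = t")
              case True
              then show ?thesis using tW(3) l1 LL_refl tW' unfolding rep'_def by auto
            next
              case False
              then have "v \<in> W" using v tW(3) by simp
              then show ?thesis using rep(1) mono tW(3) False unfolding rep'_def by auto
            qed
          qed
          have "rep' ` W = rep ` W" unfolding rep'_def using sW' tW' by (intro image_cong) auto
          then have img: "rep' ` W' = insert s (rep ` W)" using tW(3) tW' unfolding rep'_def by auto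
          have "s \<notin> rep ` W" using rep(1) sW' by auto
          then have "card (rep' ` W') = card (rep ` W) + 1" using img fW by simp
          moreover have "card W' = card W + 2" using tW(3) tW' sW' fW by simp
          ultimately have "card Sr' + card (rep' ` W') \<le> card W'" using rep(2) cSr' by simp
          then show "\<exists>rep. (\<forall>w\<in>W'. rep w \<in> W' \<and> (w, rep w) \<in> LL (Sr' \<union> Sf')) \<and>
                        card Sr' + card (rep ` W') \<le> card W'" using A by blast
        qed
      qed
    qed
  next
    case sF
    from p2 sF(3) consider
        (tF) w' where "w' \<in> W" "dist E c {} t w' < ereal r" "Sf' = insert (t, w') (insert (s, w) Sf)" "W' = W"
      | (tW) "\<forall>w\<in>W. \<not> dist E c {} t w < ereal r" "Sf' = insert (s, w) Sf" "W' = insert t W"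
      unfolding proc_terminal_def by auto
    then show ?thesis
    proof cases
      case tF
      show ?thesis unfolding Inv_def
      proof (intro conjI)
        show "finite Sr'" "finite Sf'" "finite W'" "Sr' \<subseteq> U" using fSr' fSf fW tF Sr'U by auto
        show "card Sf' + card W' \<le> 2 * card Sr'"
          using cins[OF fSf, of "(s, w)"] cins[of "insert (s, w) Sf" "(t, w')"] fSf cards cSr' tF by simp
        show "\<forall>st\<in>Sr'. ereal b < dist E c {} (fst st) (snd st)" by (rule I3')
        show "\<forall>x\<in>W'. \<exists>st\<in>Sr'. x = fst st \<or> x = snd st" using tF(4) by (intro cover_ins[OF I4 SrSr' sSr']) auto
        show "pwf E c r W'" using I5 tF(4) by simp
        show "\<forall>p\<in>Sf'. dist E c {} (fst p) (snd p) < ereal r" using I6 tF(2,3) sF(2) by auto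
        show "0 < r \<longrightarrow> (\<exists>rep. (\<forall>w\<in>W'. rep w \<in> W' \<and> (w, rep w) \<in> LL (Sr' \<union> Sf')) \<and>
                        card Sr' + card (rep ` W') \<le> card W')"
        proof
          assume "0 < r"
          then obtain rep where rep: "\<forall>w\<in>W. rep w \<in> W \<and> (w, rep w) \<in> LL ?S"
            "card Sr + card (rep ` W) \<le> card W" using I7 by blast
          have neq: "rep w \<noteq> rep w'"
          proof
            assume eq: "rep w = rep w'"
            have "(w, w') \<in> LL ?S" using rep(1) sF(1) tF(1) eq LL_trans LL_sym by metis
            then have d0: "dist E c ?S w w' = 0" using dist_linked[OF cnn] unfolding LL_def by blast
            define a1 where "a1 = real_of_ereal (dist E c {} s w)"
            define a2 where "a2 = real_of_ereal (dist E c {} t w')"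
            have a1: "dist E c {} s w = ereal a1" using dist_fin2[OF sF(2)] a1_def by simp
            have a2: "dist E c {} t w' = ereal a2" using dist_fin2[OF tF(2)] a2_def by simp
            have "a1 < r" "a2 < r" using a1 a2 sF(2) tF(2) by auto
            have "dist E c ?S s t \<le> dist E c ?S s w + dist E c ?S w t" by (rule dist_triangle[OF cnn])
            also have "dist E c ?S w t \<le> dist E c ?S w w' + dist E c ?S w' t" by (rule dist_triangle[OF cnn])
            also have "dist E c ?S w' t = dist E c ?S t w'" by (rule dist_sym[OF cnn])
            also have "dist E c ?S t w' \<le> ereal a2" using dist_mono[OF cnn, of ?S t w'] a2 by simp
            also have "dist E c ?S s w \<le> ereal a1" using dist_mono[OF cnn, of ?S s w] a1 by simp
            finally have "dist E c ?S s t \<le> ereal (a1 + a2)" using d0 by (simp add: add_mono)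
            with vd have "ereal b < ereal (a1 + a2)" by (rule order_less_le_trans)
            then have "b < a1 + a2" by simp
            then show False using \<open>a1 < r\<close> \<open>a2 < r\<close> br by linarith
          qed
          define rep' where "rep' = (\<lambda>v. if rep v = rep w' then rep w else rep v)"
          have mono: "LL ?S \<subseteq> LL (Sr' \<union> Sf')" using SrSr' tF(3) by (intro LL_mono) auto
          have l1: "(w', t) \<in> LL (Sr' \<union> Sf')" using tF(3) by (intro LL_base') auto
          have l2: "(t, s) \<in> LL (Sr' \<union> Sf')" using sSr' by (intro LL_base') auto
          have l3: "(s, w) \<in> LL (Sr' \<union> Sf')" using tF(3) by (intro LL_base) auto
          have l4: "(w, rep w) \<in> LL (Sr' \<union> Sf')" using rep(1) sF(1) mono by blast
          have A: "\<forall>v\<in>W'. rep' v \<in> W' \<and> (v, rep' v) \<in> LL (Sr' \<union> Sf')"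
          proof
            fix v assume v: "v \<in> W'"
            then have vW: "v \<in> W" using tF(4) by simp
            have lv: "(v, rep v) \<in> LL (Sr' \<union> Sf')" using rep(1) vW mono by blast
            show "rep' v \<in> W' \<and> (v, rep' v) \<in> LL (Sr' \<union> Sf')"
            proof (cases "rep v = rep w'")
              case True
              have "(w', rep w') \<in> LL (Sr' \<union> Sf')" using rep(1) tF(1) mono by blast
              then have r1: "(rep w', w') \<in> LL (Sr' \<union> Sf')" by (rule LL_sym)
              have lv': "(v, rep w') \<in> LL (Sr' \<union> Sf')" using lv True by simp
              have "(v, rep w) \<in> LL (Sr' \<union> Sf')"
                using LL_trans[OF lv' LL_trans[OF r1 LL_trans[OF l1 LL_trans[OF l2 LL_trans[OF l3 l4]]]]] .
              then show ?thesis using True rep(1) sF(1) tF(4) unfolding rep'_def by auto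
            next
              case False
              then show ?thesis using lv rep(1) vW tF(4) unfolding rep'_def by auto
            qed
          qed
          have sub: "rep' ` W' \<subseteq> rep ` W - {rep w'}" using neq sF(1) tF(4) unfolding rep'_def by auto
          have "card (rep ` W - {rep w'}) = card (rep ` W) - 1" using tF(1) fW by simp
          moreover have "card (rep ` W) \<ge> 1" using tF(1) fW by (auto simp: Suc_le_eq card_gt_0_iff)
          moreover have "card (rep' ` W') \<le> card (rep ` W - {rep w'})" using sub fW by (intro card_mono) auto
          ultimately have "card Sr' + card (rep' ` W') \<le> card W'" using rep(2) cSr' tF(4) by simp
          then show "\<exists>rep. (\<forall>w\<in>W'. rep w \<in> W' \<and> (w, rep w) \<in> LL (Sr' \<union> Sf')) \<and>
                        card Sr' + card (rep ` W') \<le> card W'" using A by blast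
        qed
      qed
    next
      case tW
      show ?thesis unfolding Inv_def
      proof (intro conjI)
        show "finite Sr'" "finite Sf'" "finite W'" "Sr' \<subseteq> U" using fSr' fSf fW tW Sr'U by auto
        show "card Sf' + card W' \<le> 2 * card Sr'"
          using cins[OF fSf, of "(s, w)"] cins[OF fW, of t] cards cSr' tW by simp
        show "\<forall>st\<in>Sr'. ereal b < dist E c {} (fst st) (snd st)" by (rule I3')
        show "\<forall>x\<in>W'. \<exists>st\<in>Sr'. x = fst st \<or> x = snd st" using tW(3) by (intro cover_ins[OF I4 SrSr' sSr']) auto
        show "pwf E c r W'" using pwf_insert[OF I5 tW(1)] tW(3) by simp
        show "\<forall>p\<in>Sf'. dist E c {} (fst p) (snd p) < ereal r" using I6 sF(2) tW(2) by auto
        show "0 < r \<longrightarrow> (\<exists>rep. (\<forall>w\<in>W'. rep w \<in> W' \<and> (w, rep w) \<in> LL (Sr' \<union> Sf')) \<and>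
                        card Sr' + card (rep ` W') \<le> card W')"
        proof
          assume "0 < r"
          then obtain rep where rep: "\<forall>w\<in>W. rep w \<in> W \<and> (w, rep w) \<in> LL ?S"
            "card Sr + card (rep ` W) \<le> card W" using I7 by blast
          have tW': "t \<notin> W" using tW(1) dist_refl[OF cnn, of "{}" t] \<open>0 < r\<close> by (auto simp: zero_ereal_def)
          define rep' where "rep' = rep(t := rep w)"
          have mono: "LL ?S \<subseteq> LL (Sr' \<union> Sf')" using SrSr' tW(2) by (intro LL_mono) auto
          have l1: "(t, s) \<in> LL (Sr' \<union> Sf')" using sSr' by (intro LL_base') auto
          have l2: "(s, w) \<in> LL (Sr' \<union> Sf')" using tW(2) by (intro LL_base) auto
          have l3: "(w, rep w) \<in> LL (Sr' \<union> Sf')" using rep(1) sF(1) mono by blast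
          have A: "\<forall>v\<in>W'. rep' v \<in> W' \<and> (v, rep' v) \<in> LL (Sr' \<union> Sf')"
          proof
            fix v assume v: "v \<in> W'"
            show "rep' v \<in> W' \<and> (v, rep' v) \<in> LL (Sr' \<union> Sf')"
            proof (cases "v = t")
              case True
              then show ?thesis using rep(1) sF(1) tW(3) LL_trans[OF l1 LL_trans[OF l2 l3]] unfolding rep'_def by auto
            next
              case False
              then have "v \<in> W" using v tW(3) by simp
              then show ?thesis using rep(1) mono tW(3) False unfolding rep'_def by auto
            qed
          qed
          have "rep' ` W' = rep ` W"
          proof -
            have "rep' ` W = rep ` W" unfolding rep'_def using tW' by (intro image_cong) auto
            then show ?thesis using tW(3) sF(1) unfolding rep'_def by auto
          qed
          then have "card Sr' + card (rep' ` W') \<le> card W'"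
            using rep(2) cSr' tW(3) tW' fW by simp
          then show "\<exists>rep. (\<forall>w\<in>W'. rep w \<in> W' \<and> (w, rep w) \<in> LL (Sr' \<union> Sf')) \<and>
                        card Sr' + card (rep ` W') \<le> card W'" using A by blast
        qed
      qed
    qed
  qed
qed

lemma Inv_reach: "(proc_step E c U b r)\<^sup>*\<^sup>* ({}, {}, {}) st \<Longrightarrow> case st of (Sr, Sf, W) \<Rightarrow> Inv E c U b r Sr Sf W"
proof (induction rule: rtranclp_induct)
  case base then show ?case using Inv_init by simp
next
  case (step y z)
  then show ?case using Inv_step by (auto split: prod.splits)
qed

end


lemma sum_set_le_sum_list:
  fixes c :: "'a \<Rightarrow> real"
  shows "(\<forall>x\<in>set L. 0 \<le> c x) \<Longrightarrow> sum c (set L) \<le> sum_list (map c L)"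
proof (induction L)
  case Nil then show ?case by simp
next
  case (Cons a L)
  have "sum c (set (a # L)) \<le> c a + sum c (set L)"
    using Cons.prems by (simp add: sum.insert_if)
  then show ?case using Cons by simp
qed

lemma path_cost:
  assumes "is_walk E {} xs" "\<forall>e\<in>E. 0 \<le> c e"
  shows "path_edges xs \<subseteq> E" "sum c (path_edges xs) \<le> walk_cost c {} xs"
proof -
  have sub: "\<forall>(a, b)\<in>set (zip xs (tl xs)). {a, b} \<in> E"
    using assms(1) unfolding is_walk_def linked_def by auto
  then show "path_edges xs \<subseteq> E" unfolding path_edges_def by auto
  have "walk_cost c {} xs = sum_list (map c (map (\<lambda>(a, b). {a, b}) (zip xs (tl xs))))"
    unfolding walk_cost_def linked_def by (simp add: case_prod_unfold comp_def)
  moreover have "sum c (path_edges xs) \<le> sum_list (map c (map (\<lambda>(a, b). {a, b}) (zip xs (tl xs))))"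
    unfolding path_edges_def
    by (rule sum_set_le_sum_list) (use sub assms(2) in auto)
  ultimately show "sum c (path_edges xs) \<le> walk_cost c {} xs" by simp
qed

lemma final_arith:
  fixes A0 x y z g :: real
  assumes "2 < g" "0 \<le> A0" "y \<le> x" "z + x \<le> 2 * y" "x * (g - 2) \<le> 2 * A0" "0 \<le> z"
  shows "2 * A0 + 2 * y + g * z \<le> 4 * g / (g - 2) * A0"
proof -
  have h1: "g * z \<le> g * (2 * y - x)" by (rule mult_left_mono) (use assms in linarith)+
  have h2: "(1 + g) * y \<le> (1 + g) * x" by (rule mult_left_mono) (use assms in linarith)+
  have "2 * y + g * z \<le> (2 + g) * x" using h1 h2 unfolding ring_distribs by linarith
  moreover have "(2 + g) * x * (g - 2) \<le> (2 + g) * (2 * A0)"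
    using assms(1,5) by (simp add: mult.assoc mult_left_mono)
  then have "(2 + g) * x \<le> (2 + g) * (2 * A0) / (g - 2)"
    using assms(1) by (simp add: pos_le_divide_eq)
  ultimately have "2 * A0 + 2 * y + g * z \<le> 2 * A0 + (2 + g) * (2 * A0) / (g - 2)" by linarith
  also have "\<dots> = 4 * g / (g - 2) * A0" using assms(1) by (simp add: field_simps)
  finally show ?thesis .
qed



theorem mainTheorem16:
  fixes V :: "'v set" and E :: "'v set set" and c :: "'v set \<Rightarrow> real"
    and U :: "('v \<times> 'v) set" and lam T beta gamma :: real and k :: nat
    and E0 :: "'v set set" and ED :: "('v \<times> 'v) set \<Rightarrow> 'v set set"
    and Sr Sf :: "('v \<times> 'v) set" and W :: "'v set"
    and F :: "'v set set" and P :: "'v \<times> 'v \<Rightarrow> 'v list"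
  assumes "graph V E" and "\<forall>e\<in>E. c e \<ge> 0"
    and "U \<subseteq> V \<times> V" and "lam \<ge> 1" and "k \<ge> 1" and "k \<le> card U"
    and "T \<ge> 0" and "2 < gamma" and "gamma \<le> beta / 2"
    and opt: "robust_optimal E c U k lam E0 ED"
    and run: "proc_final E c U (beta * T / real k) (gamma * T / real k) (Sr, Sf, W)"
    and forest: "steiner_forest E Sr F" "sum c F \<le> 2 * steiner_opt E c Sr"
    and paths: "\<forall>p\<in>Sf. shortest_path E c (fst p) (snd p) (P p)"
    and "T \<ge> second_stage c U k ED"
  shows "sum c (F \<union> (\<Union>p\<in>Sf. path_edges (P p)))
           \<le> 4 * gamma / (gamma - 2) * (sum c E0 + second_stage c U k ED)"
proof -
  note g = assms(1)
  have cnn: "\<forall>e\<in>E. 0 \<le> c e" using assms(2) by simp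
  define tau where "tau = T / real k"
  define rho where "rho = gamma * T / real k"
  define b where "b = beta * T / real k"
  define Ts where "Ts = second_stage c U k ED"
  define Phi where "Phi = sum c E0"
  have k0: "0 < real k" using assms(5) by simp
  have tau0: "0 \<le> tau" unfolding tau_def using assms(7) k0 by simp
  have rho_eq: "rho = gamma * tau" unfolding rho_def tau_def by simp
  have b_eq: "b = beta * tau" unfolding b_def tau_def by simp
  have rho0: "0 \<le> rho" unfolding rho_eq using tau0 assms(8) by simp
  have br: "2 * rho \<le> b"
  proof -
    have "(2 * gamma) * tau \<le> beta * tau" using assms(9) tau0 by (intro mult_right_mono) auto
    then show ?thesis unfolding rho_eq b_eq by simp
  qed
  have fE: "finite E" using graph_finite_E[OF g] .
  have fV: "finite V" using g unfolding graph_def by (rule conjunct1)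
  have fU: "finite U" using assms(3) fV by (meson finite_SigmaI finite_subset)
  have feas: "robust_feasible E U k E0 ED" using opt unfolding robust_optimal_def by (rule conjunct1)
  have reach: "(proc_step E c U b rho)\<^sup>*\<^sup>* ({}, {}, {}) (Sr, Sf, W)"
    using run unfolding proc_final_def b_def rho_def by simp
  have I: "Inv E c U b rho Sr Sf W" using Inv_reach[OF cnn rho0 br reach] by simp
  from I have fSr: "finite Sr" and fSf: "finite Sf" and fW: "finite W" and SrU: "Sr \<subseteq> U"
    and cards: "card Sf + card W \<le> 2 * card Sr"
    and I3: "\<forall>st\<in>Sr. ereal b < dist E c {} (fst st) (snd st)"
    and I4: "\<forall>x\<in>W. \<exists>st\<in>Sr. x = fst st \<or> x = snd st"
    and I5: "pwf E c rho W"
    and I6: "\<forall>p\<in>Sf. dist E c {} (fst p) (snd p) < ereal rho"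
    and I7: "0 < rho \<longrightarrow> (\<exists>rep. (\<forall>w\<in>W. rep w \<in> W \<and> (w, rep w) \<in> LL (Sr \<union> Sf)) \<and>
                        card Sr + card (rep ` W) \<le> card W)"
    unfolding Inv_def by blast+
  have fscen: "finite (scenarios U k)"
  proof -
    have "scenarios U k \<subseteq> Pow U" unfolding scenarios_def by auto
    then show ?thesis using fU by (meson finite_Pow_iff finite_subset)
  qed
  have TsD: "sum c (ED D) \<le> Ts" if "D \<in> scenarios U k" for D
    unfolding Ts_def second_stage_def using fscen that by (intro Max_ge) auto
  obtain D0 where "D0 \<subseteq> U" "card D0 = k" using obtain_subset_with_card_n[OF assms(6)] by metis
  then have D0: "D0 \<in> scenarios U k" unfolding scenarios_def by simp
  have EDE: "ED D \<subseteq> E" if "D \<in> scenarios U k" for D using feas that unfolding robust_feasible_def by blast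
  have E0E: "E0 \<subseteq> E" using feas unfolding robust_feasible_def by blast
  have Ts0: "0 \<le> Ts" using TsD[OF D0] EDE[OF D0] cnn sum_nonneg[of "ED D0" c] by force
  have TsT: "Ts \<le> T" using assms(15) unfolding Ts_def .
  have Phi0: "0 \<le> Phi" unfolding Phi_def using E0E cnn by (auto intro!: sum_nonneg)
  have count: "real n * Ts \<le> Ts + real m * tau" if "n * k \<le> m + k - 1" for n m
  proof -
    have a: "real (n * k) \<le> real (m + k - 1)" using that by (simp only: of_nat_le_iff)
    have b: "real (m + k - 1) = real m + real k - 1" using assms(5) by (simp add: of_nat_diff)
    have "real n * real k \<le> real m + real k - 1" using a b by simp
    then have "real n * real k * Ts \<le> (real m + real k - 1) * Ts" using Ts0 by (rule mult_right_mono)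
    also have "\<dots> = real m * Ts + (real k - 1) * Ts" by (simp add: algebra_simps)
    also have "\<dots> \<le> real m * T + real k * Ts" using Ts0 TsT by (intro add_mono mult_left_mono mult_right_mono) auto
    finally have "real k * (real n * Ts) \<le> real k * (Ts + real m * tau)"
      unfolding tau_def using k0 by (simp add: algebra_simps)
    then show ?thesis using k0 by simp
  qed
  have Pw: "is_walk E {} (P p)" "walk_cost c {} (P p) < rho" if "p \<in> Sf" for p
  proof -
    have sp: "shortest_path E c (fst p) (snd p) (P p)" using paths that by blast
    then show "is_walk E {} (P p)" unfolding shortest_path_def by blast
    have eq: "ereal (walk_cost c {} (P p)) = dist E c {} (fst p) (snd p)" using sp unfolding shortest_path_def by blast
    have "dist E c {} (fst p) (snd p) < ereal rho" using I6 that by blast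
    then have "ereal (walk_cost c {} (P p)) < ereal rho" unfolding eq .
    then show "walk_cost c {} (P p) < rho" by simp
  qed
  have FE: "F \<subseteq> E" using forest(1) unfolding steiner_forest_def by blast
  have PE: "path_edges (P p) \<subseteq> E" if "p \<in> Sf" for p using path_cost(1)[OF Pw(1)[OF that] cnn] .
  have "sum c (F \<union> (\<Union>p\<in>Sf. path_edges (P p))) \<le> sum c F + sum c (\<Union>p\<in>Sf. path_edges (P p))"
  proof (rule sum_Un_le_nn)
    have U: "(\<Union>p\<in>Sf. path_edges (P p)) \<subseteq> E" using PE by blast
    then show "finite (\<Union>p\<in>Sf. path_edges (P p))" using fE finite_subset by blast
    show "finite F" using FE fE finite_subset by blast
    show "\<forall>x\<in>F \<inter> (\<Union>p\<in>Sf. path_edges (P p)). 0 \<le> c x" using FE cnn by blast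
  qed
  also have "sum c (\<Union>p\<in>Sf. path_edges (P p)) \<le> (\<Sum>p\<in>Sf. sum c (path_edges (P p)))"
  proof (intro sum_UN_le_nn fSf ballI)
    fix p assume "p \<in> Sf"
    then show "finite (path_edges (P p))" using PE fE finite_subset by blast
    fix e assume "e \<in> path_edges (P p)"
    then show "0 \<le> c e" using PE \<open>p \<in> Sf\<close> cnn by blast
  qed
  also have "(\<Sum>p\<in>Sf. sum c (path_edges (P p))) \<le> real (card Sf) * rho"
  proof (rule sum_bounded_above)
    fix p assume "p \<in> Sf"
    then have "sum c (path_edges (P p)) \<le> walk_cost c {} (P p)" "walk_cost c {} (P p) < rho"
      using path_cost(2)[OF Pw(1) cnn] Pw(2) by blast+
    then show "sum c (path_edges (P p)) \<le> rho" by linarith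
  qed
  finally have L1: "sum c (F \<union> (\<Union>p\<in>Sf. path_edges (P p))) \<le> sum c F + real (card Sf) * rho" by simp
  obtain DD1 where DD1: "DD1 \<subseteq> scenarios U k" "finite DD1" "card DD1 * k \<le> card Sr + k - 1"
    "\<forall>a\<in>Sr. \<exists>D\<in>DD1. a \<in> D"
    using cover[OF fU assms(5,6) SrU] by blast
  have "steiner_opt E c Sr \<le> Phi + (\<Sum>D\<in>DD1. sum c (ED D))"
    unfolding Phi_def using opt_upper[OF g cnn feas DD1(1,2,4)] .
  also have "(\<Sum>D\<in>DD1. sum c (ED D)) \<le> real (card DD1) * Ts"
    using TsD DD1(1) by (intro sum_bounded_above) blast
  also have "real (card DD1) * Ts \<le> Ts + real (card Sr) * tau" using count[OF DD1(3)] .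
  finally have Opt: "steiner_opt E c Sr \<le> Phi + Ts + real (card Sr) * tau" by simp
  have UB: "sum c (F \<union> (\<Union>p\<in>Sf. path_edges (P p))) \<le> 2 * (Phi + Ts) + 2 * (real (card Sr) * tau) + gamma * (real (card Sf) * tau)"
    using L1 forest(2) Opt unfolding rho_eq by (simp add: algebra_simps)
  show ?thesis
  proof (cases "T = 0")
    case True
    then have "tau = 0" unfolding tau_def by simp
    then have "sum c (F \<union> (\<Union>p\<in>Sf. path_edges (P p))) \<le> 2 * (Phi + Ts)" using UB by simp
    also have "\<dots> \<le> 4 * gamma / (gamma - 2) * (Phi + Ts)"
    proof (rule mult_right_mono)
      show "2 \<le> 4 * gamma / (gamma - 2)" using assms(8) by (simp add: pos_le_divide_eq)
    qed (use Phi0 Ts0 in simp)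
    finally show ?thesis unfolding Phi_def Ts_def .
  next
    case False
    then have rhop: "0 < rho" unfolding rho_def using assms(7,8) k0 by simp
    from mp[OF I7 rhop] obtain rep where "\<forall>w\<in>W. rep w \<in> W \<and> (w, rep w) \<in> LL (Sr \<union> Sf)"
      and rep: "card Sr + card (rep ` W) \<le> card W" by (elim exE conjE)
    have SrW: "card Sr \<le> card W" using rep by linarith
    define p where "p x = (SOME st. st \<in> Sr \<and> (x = fst st \<or> x = snd st))" for x
    have pW: "p x \<in> Sr \<and> (x = fst (p x) \<or> x = snd (p x))" if "x \<in> W" for x
    proof -
      have "\<exists>st. st \<in> Sr \<and> (x = fst st \<or> x = snd st)" using bspec[OF I4 that] by blast
      then show ?thesis unfolding p_def by (rule someI_ex)
    qed
    have AU: "p ` W \<subseteq> U" using pW SrU by blast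
    obtain DD2 where DD2: "DD2 \<subseteq> scenarios U k" "finite DD2" "card DD2 * k \<le> card (p ` W) + k - 1"
      "\<forall>a\<in>p ` W. \<exists>D\<in>DD2. a \<in> D"
      using cover[OF fU assms(5,6) AU] by blast
    define j where "j x = (SOME D. D \<in> DD2 \<and> p x \<in> D)" for x
    have jW: "j x \<in> DD2 \<and> p x \<in> j x" if "x \<in> W" for x
    proof -
      have "p x \<in> p ` W" using that by (rule imageI)
      then have "\<exists>D. D \<in> DD2 \<and> p x \<in> D" using DD2(4) by blast
      then show ?thesis unfolding j_def by (rule someI_ex)
    qed
    have hb: "ereal (rho / 2) \<le> ereal b" using br rho0 by simp
    have jprop: "\<forall>x\<in>W. j x \<in> DD2 \<and> (\<exists>y. ((x, y) \<in> j x \<or> (y, x) \<in> j x) \<and> \<not> dist E c {} x y < ereal (rho / 2))"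
    proof
      fix x assume x: "x \<in> W"
      have far: "\<not> dist E c {} (fst (p x)) (snd (p x)) < ereal (rho / 2)"
        using I3 pW[OF x] hb by (meson not_less order_less_le_trans order.strict_trans)
      show "j x \<in> DD2 \<and> (\<exists>y. ((x, y) \<in> j x \<or> (y, x) \<in> j x) \<and> \<not> dist E c {} x y < ereal (rho / 2))"
      proof (cases "x = fst (p x)")
        case True
        then have "(x, snd (p x)) = p x" by (metis prod.collapse)
        then show ?thesis using jW[OF x] far True by (intro conjI exI[of _ "snd (p x)"]) auto
      next
        case False
        then have xs: "x = snd (p x)" using pW[OF x] by blast
        then have "(fst (p x), x) = p x" by (metis prod.collapse)
        moreover have "\<not> dist E c {} x (fst (p x)) < ereal (rho / 2)"
          using far xs dist_sym[OF cnn, of "{}" x "fst (p x)"] by simp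
        ultimately show ?thesis using jW[OF x] by (intro conjI exI[of _ "fst (p x)"]) auto
      qed
    qed
    have pw': "\<forall>x\<in>W. \<forall>x'\<in>W. x \<noteq> x' \<longrightarrow> \<not> dist E c {} x x' < ereal (2 * (rho / 2))"
      using I5 unfolding pwf_def by simp
    have h0: "0 \<le> rho / 2" using rho0 by simp
    have "real (card W) * (rho / 2) \<le> sum c E0 + (\<Sum>D\<in>DD2. sum c (ED D))"
      using robust_lower[OF g cnn feas h0 fW pw' DD2(1,2) jprop] .
    also have "(\<Sum>D\<in>DD2. sum c (ED D)) \<le> real (card DD2) * Ts"
      using TsD DD2(1) by (intro sum_bounded_above) blast
    also have "real (card DD2) * Ts \<le> Ts + real (card (p ` W)) * tau" using count[OF DD2(3)] .
    also have "real (card (p ` W)) * tau \<le> real (card W) * tau"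
      using card_image_le[OF fW, of p] tau0 by (intro mult_right_mono) auto
    finally have LB: "real (card W) * (rho / 2) \<le> Phi + Ts + real (card W) * tau" unfolding Phi_def by simp
    have LB2: "(real (card W) * tau) * (gamma - 2) \<le> 2 * (Phi + Ts)"
      using LB unfolding rho_eq by (simp add: algebra_simps)
    have c1: "real (card Sr) * tau \<le> real (card W) * tau" using SrW tau0 by (intro mult_right_mono) auto
    have c2: "real (card Sf) * tau + real (card W) * tau \<le> 2 * (real (card Sr) * tau)"
    proof -
      have "real (card Sf) + real (card W) \<le> 2 * real (card Sr)" using cards by linarith
      then have "(real (card Sf) + real (card W)) * tau \<le> (2 * real (card Sr)) * tau"
        using tau0 by (rule mult_right_mono)
      then show ?thesis by (simp add: algebra_simps)
    qed
    have "sum c (F \<union> (\<Union>p\<in>Sf. path_edges (P p))) \<le> 4 * gamma / (gamma - 2) * (Phi + Ts)"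
      using UB final_arith[OF assms(8) _ c1 c2 LB2] Phi0 Ts0 tau0 by (smt (verit) zero_le_mult_iff of_nat_0_le_iff)
    then show ?thesis unfolding Phi_def Ts_def .
  qed
qed


end
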